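(* Let $m,n>0$, $h\ge0$ and $\theta>0$, and let $g(u)=\bar\Psi_{m+h,n}\big(\theta\,\bar\Psi_{m,n}^{-1}(u)\big)$ for $u\in(0,1)$. If $\theta\le1$, then $g$ is concave on $(0,1)$; if $\theta>1$ and $h=0$, then $g$ is convex on $(0,1)$.
   Context: $\Psi_{k,n}$ denotes the CDF of $U/W$, where $U\sim\chi^2_k$ and $W\sim\chi^2_n$ are independent (equivalently, of $(k/n)F_{k,n}$); $\bar\Psi_{k,n}=1-\Psi_{k,n}$ and $\bar\Psi_{k,n}^{-1}:(0,1)\to(0,\infty)$ is the inverse of $\bar\Psi_{k,n}$. *)

theory Defs
  imports "HOL-Probability.Probability"
begin

definition chi2_density :: "real \<Rightarrow> real \<Rightarrow> real" where
  "chi2_density k x =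
     (if x > 0 then x powr (k/2 - 1) * exp (- x/2) / (2 powr (k/2) * Gamma (k/2)) else 0)"

definition chi2 :: "real \<Rightarrow> real measure" where
  "chi2 k = density lborel (\<lambda>x. ennreal (chi2_density k x))"

definition Psi :: "real \<Rightarrow> real \<Rightarrow> real \<Rightarrow> real" where
  "Psi k n x = measure (chi2 k \<Otimes>\<^sub>M chi2 n) {p. fst p / snd p \<le> x}"

definition Psibar :: "real \<Rightarrow> real \<Rightarrow> real \<Rightarrow> real" where
  "Psibar k n x = 1 - Psi k n x"

definition Psibar_inv :: "real \<Rightarrow> real \<Rightarrow> real \<Rightarrow> real" where
  "Psibar_inv k n u = (THE x. x > 0 \<and> Psibar k n x = u)"

end

theory Submission
  imports Defs
begin

lemma gamma_nn:
  fixes s l :: real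
  assumes s: "s > 0" and l: "l > 0"
  shows "(\<integral>\<^sup>+w. ennreal (if w > 0 then w powr (s-1) * exp (-(l*w)) else 0) \<partial>lborel)
         = ennreal (Gamma s / l powr s)"
proof -
  have base: "(\<integral>\<^sup>+v. ennreal (indicator {0..} v * (v powr (s-1) / exp v)) \<partial>lborel) = ennreal (Gamma s)"
    by (rule nn_integral_has_integral_lebesgue[OF _ Gamma_integral_real[OF s]]) auto
  have eq: "(\<lambda>v. ennreal (if v/l > 0 then (v/l) powr (s-1) * exp (-(l*(v/l))) else 0))
      = (\<lambda>v. ennreal (l powr (1-s)) * ennreal (indicator {0..} v * (v powr (s-1) / exp v)))"
  proof
    fix v
    show "ennreal (if v/l > 0 then (v/l) powr (s-1) * exp (-(l*(v/l))) else 0)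
      = ennreal (l powr (1-s)) * ennreal (indicator {0..} v * (v powr (s-1) / exp v))"
    proof (cases "v > 0")
      case True
      have "(v/l) powr (s-1) * exp (-(l*(v/l))) = l powr (1-s) * (v powr (s-1) / exp v)"
        using True l by (simp add: powr_divide powr_diff exp_minus field_simps)
      then show ?thesis using True l by (subst ennreal_mult[symmetric]) (auto simp: indicator_def)
    next
      case False
      then show ?thesis using l by (cases "v = 0") (auto simp: indicator_def zero_less_divide_iff field_simps)
    qed
  qed
  have "(\<integral>\<^sup>+w. ennreal (if w > 0 then w powr (s-1) * exp (-(l*w)) else 0) \<partial>lborel)
     = ennreal (1/l) * (\<integral>\<^sup>+v. ennreal (l powr (1-s)) * ennreal (indicator {0..} v * (v powr (s-1) / exp v)) \<partial>lborel)"
    apply (subst nn_integral_real_affine[where c="1/l" and t=0])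
    using l apply simp_all
    apply (intro arg_cong2[where f="(*)"] refl nn_integral_cong)
    subgoal for x using fun_cong[OF eq, of x] l by (auto simp: indicator_def zero_less_divide_iff)
    done
  also have "\<dots> = ennreal (1/l) * (ennreal (l powr (1-s)) * ennreal (Gamma s))"
    using base by (subst nn_integral_cmult) auto
  also have "\<dots> = ennreal (Gamma s / l powr s)"
    using l s Gamma_real_pos[OF s]
    by (simp add: ennreal_mult'[symmetric] powr_diff field_simps)
  finally show ?thesis .
qed

lemma chi2_nonneg: "k > 0 \<Longrightarrow> chi2_density k x \<ge> 0"
  unfolding chi2_density_def by (auto intro!: divide_nonneg_nonneg mult_nonneg_nonneg Gamma_real_nonneg)

lemma chi2_meas[measurable]: "chi2_density k \<in> borel_measurable borel"
  unfolding chi2_density_def by measurable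

lemma chi2_total:
  assumes k: "k > 0"
  shows "(\<integral>\<^sup>+x. ennreal (chi2_density k x) \<partial>lborel) = 1"
proof -
  have G: "Gamma (k/2) > 0" using k by (intro Gamma_real_pos) auto
  have "(\<lambda>x. ennreal (chi2_density k x)) = (\<lambda>x. ennreal (1 / (2 powr (k/2) * Gamma (k/2))) *
      ennreal (if x > 0 then x powr (k/2-1) * exp (-((1/2)*x)) else 0))"
    using G by (auto simp: chi2_density_def ennreal_mult'[symmetric] intro!: ext)
  then have "(\<integral>\<^sup>+x. ennreal (chi2_density k x) \<partial>lborel) =
     ennreal (1 / (2 powr (k/2) * Gamma (k/2))) * ennreal (Gamma (k/2) / (1/2) powr (k/2))"
    using k by (simp add: nn_integral_cmult gamma_nn)
  also have "\<dots> = 1" using G by (simp add: ennreal_mult'[symmetric] powr_divide)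
  finally show ?thesis .
qed

lemma chi2_prob: "k > 0 \<Longrightarrow> prob_space (chi2 k)"
  unfolding chi2_def by (rule prob_spaceI) (simp add: emeasure_density chi2_total)

definition phi :: "real \<Rightarrow> real \<Rightarrow> real \<Rightarrow> real" where
  "phi k n t = (if t > 0 then Gamma ((k+n)/2) / (2 powr (k/2) * Gamma (k/2) * (2 powr (n/2) * Gamma (n/2)))
      * t powr (k/2-1) / ((1+t)/2) powr ((k+n)/2) else 0)"

lemma phi_pos: "k > 0 \<Longrightarrow> n > 0 \<Longrightarrow> t > 0 \<Longrightarrow> phi k n t > 0"
  unfolding phi_def by (auto intro!: Gamma_real_pos divide_pos_pos mult_pos_pos)

lemma inner_integral:
  assumes k: "k > 0" and n: "n > 0" and t: "t > 0"
  shows "(\<integral>\<^sup>+w. ennreal (chi2_density n w * w * chi2_density k (w*t)) \<partial>lborel) = ennreal (phi k n t)"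
proof -
  define C where "C = 1 / (2 powr (k/2) * Gamma (k/2) * (2 powr (n/2) * Gamma (n/2)))"
  have Gk: "Gamma (k/2) > 0" using k by (intro Gamma_real_pos) auto
  have Gn: "Gamma (n/2) > 0" using n by (intro Gamma_real_pos) auto
  have C: "C > 0" unfolding C_def using Gk Gn by auto
  have pw: "chi2_density n w * w * chi2_density k (w*t) =
     (C * t powr (k/2-1)) * (if w > 0 then w powr ((k+n)/2-1) * exp (-((1+t)/2*w)) else 0)" for w
  proof (cases "w > 0")
    case True
    have e: "exp (-w/2) * exp (-(w*t)/2) = exp (-((1+t)/2*w))"
      by (simp add: exp_add[symmetric] field_simps)
    have ex: "n/2-1+1+(k/2-1) = (k+n)/2-1" by (simp add: field_simps)
    have "w powr (n/2-1) * w * w powr (k/2-1) = w powr (n/2-1) * w powr 1 * w powr (k/2-1)"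
      using True by simp
    also have "\<dots> = w powr (n/2-1+1+(k/2-1))" by (simp only: powr_add)
    finally have p: "w powr (n/2-1) * w * w powr (k/2-1) = w powr ((k+n)/2-1)"
      unfolding ex .
    have "chi2_density n w * w * chi2_density k (w*t) =
       C * t powr (k/2-1) * (w powr (n/2-1) * w * w powr (k/2-1)) * (exp (-w/2) * exp (-(w*t)/2))"
      using True t by (simp add: chi2_density_def C_def powr_mult field_simps)
    then show ?thesis using True e p by simp
  next
    case False
    then show ?thesis by (simp add: chi2_density_def)
  qed
  have "(\<integral>\<^sup>+w. ennreal (chi2_density n w * w * chi2_density k (w*t)) \<partial>lborel)
     = (\<integral>\<^sup>+w. ennreal (C * t powr (k/2-1)) * ennreal (if w > 0 then w powr ((k+n)/2-1) * exp (-((1+t)/2*w)) else 0) \<partial>lborel)"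
    unfolding pw using C t by (intro nn_integral_cong) (simp add: ennreal_mult'[symmetric])
  also have "\<dots> = ennreal (C * t powr (k/2-1)) * ennreal (Gamma ((k+n)/2) / ((1+t)/2) powr ((k+n)/2))"
    using k n t by (simp add: nn_integral_cmult gamma_nn)
  also have "\<dots> = ennreal (C * t powr (k/2-1) * (Gamma ((k+n)/2) / ((1+t)/2) powr ((k+n)/2)))"
    using C t Gamma_real_pos[of "(k+n)/2"] k n by (subst ennreal_mult[symmetric]) auto
  also have "\<dots> = ennreal (phi k n t)"
    using t by (intro arg_cong[where f=ennreal]) (simp add: phi_def C_def field_simps)
  finally show ?thesis .
qed

lemma scale_inner:
  assumes k: "k > 0" and w: "w > 0"
  shows "(\<integral>\<^sup>+u. ennreal (chi2_density k u) * indicator {u. u / w \<le> x} u \<partial>lborel)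
       = ennreal w * (\<integral>\<^sup>+t. ennreal (chi2_density k (w*t)) * indicator {..x} t \<partial>lborel)"
proof -
  have "(\<integral>\<^sup>+u. ennreal (chi2_density k u) * indicator {u. u / w \<le> x} u \<partial>lborel)
      = \<bar>w\<bar> * (\<integral>\<^sup>+t. ennreal (chi2_density k (0 + w*t)) * indicator {u. u / w \<le> x} (0 + w*t) \<partial>lborel)"
    by (rule nn_integral_real_affine) (use w in auto)
  also have "\<dots> = ennreal w * (\<integral>\<^sup>+t. ennreal (chi2_density k (w*t)) * indicator {..x} t \<partial>lborel)"
    using w by (auto intro!: arg_cong2[where f="(*)"] nn_integral_cong simp: indicator_def)
  finally show ?thesis .
qed

lemma ratio_set_meas[measurable]: "{p::real\<times>real. fst p / snd p \<le> x} \<in> sets (lborel \<Otimes>\<^sub>M lborel)"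
proof -
  have "{p \<in> space (lborel \<Otimes>\<^sub>M lborel). fst p / snd p \<le> (x::real)} \<in> sets (lborel \<Otimes>\<^sub>M lborel)"
    by measurable
  then show ?thesis by (simp add: space_pair_measure)
qed

lemma emeasure_ratio:
  assumes k: "k > 0" and n: "n > 0"
  shows "emeasure (chi2 k \<Otimes>\<^sub>M chi2 n) {p. fst p / snd p \<le> x}
       = (\<integral>\<^sup>+t. ennreal (phi k n t) * indicator {..x} t \<partial>lborel)"
proof -
  let ?A = "{p::real\<times>real. fst p / snd p \<le> x}"
  have sf: "sigma_finite_measure (density lborel (\<lambda>x. ennreal (chi2_density n x)))"
    using chi2_prob[OF n] unfolding chi2_def by (rule prob_space_imp_sigma_finite)
  have dens: "chi2 k \<Otimes>\<^sub>M chi2 n = density (lborel \<Otimes>\<^sub>M lborel)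
      (\<lambda>(u,w). ennreal (chi2_density k u) * ennreal (chi2_density n w))"
    unfolding chi2_def by (rule pair_measure_density) (auto simp: sf lborel.sigma_finite_measure_axioms)
  have "emeasure (chi2 k \<Otimes>\<^sub>M chi2 n) ?A =
     (\<integral>\<^sup>+p. (\<lambda>(u,w). ennreal (chi2_density k u) * ennreal (chi2_density n w)) p * indicator ?A p \<partial>(lborel \<Otimes>\<^sub>M lborel))"
    unfolding dens by (rule emeasure_density) (use ratio_set_meas[of x] in auto)
  also have "\<dots> = (\<integral>\<^sup>+w. \<integral>\<^sup>+u. ennreal (chi2_density k u) * ennreal (chi2_density n w) * indicator ?A (u,w) \<partial>lborel \<partial>lborel)"
    by (subst lborel_pair.nn_integral_snd[symmetric]) auto
  also have "\<dots> = (\<integral>\<^sup>+w. \<integral>\<^sup>+t. ennreal (chi2_density n w * w * chi2_density k (w*t)) * indicator {..x} t \<partial>lborel \<partial>lborel)"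
  proof (rule nn_integral_cong)
    fix w :: real
    show "(\<integral>\<^sup>+u. ennreal (chi2_density k u) * ennreal (chi2_density n w) * indicator ?A (u,w) \<partial>lborel)
        = (\<integral>\<^sup>+t. ennreal (chi2_density n w * w * chi2_density k (w*t)) * indicator {..x} t \<partial>lborel)"
    proof (cases "w > 0")
      case False
      then show ?thesis by (simp add: chi2_density_def)
    next
      case True
      have "(\<integral>\<^sup>+u. ennreal (chi2_density k u) * ennreal (chi2_density n w) * indicator ?A (u,w) \<partial>lborel)
          = (\<integral>\<^sup>+u. ennreal (chi2_density n w) * (ennreal (chi2_density k u) * indicator {u. u / w \<le> x} u) \<partial>lborel)"
        by (intro nn_integral_cong) (simp add: indicator_def mult.commute)
      also have "\<dots> = ennreal (chi2_density n w) * (ennreal w * (\<integral>\<^sup>+t. ennreal (chi2_density k (w*t)) * indicator {..x} t \<partial>lborel))"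
        using True k by (subst nn_integral_cmult) (auto simp: scale_inner)
      also have "\<dots> = (\<integral>\<^sup>+t. ennreal (chi2_density n w * w) * (ennreal (chi2_density k (w*t)) * indicator {..x} t) \<partial>lborel)"
        using True n chi2_nonneg[OF n, of w] by (subst nn_integral_cmult) (auto simp: ennreal_mult' mult.assoc)
      also have "\<dots> = (\<integral>\<^sup>+t. ennreal (chi2_density n w * w * chi2_density k (w*t)) * indicator {..x} t \<partial>lborel)"
        using True n chi2_nonneg[OF n, of w] chi2_nonneg[OF k]
        by (intro nn_integral_cong) (simp add: ennreal_mult mult.assoc)
      finally show ?thesis .
    qed
  qed
  also have "\<dots> = (\<integral>\<^sup>+t. \<integral>\<^sup>+w. ennreal (chi2_density n w * w * chi2_density k (w*t)) * indicator {..x} t \<partial>lborel \<partial>lborel)"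
    by (rule lborel_pair.Fubini') measurable
  also have "\<dots> = (\<integral>\<^sup>+t. ennreal (phi k n t) * indicator {..x} t \<partial>lborel)"
  proof (rule nn_integral_cong)
    fix t :: real
    have "(\<integral>\<^sup>+w. ennreal (chi2_density n w * w * chi2_density k (w*t)) * indicator {..x} t \<partial>lborel)
       = (\<integral>\<^sup>+w. ennreal (chi2_density n w * w * chi2_density k (w*t)) \<partial>lborel) * indicator {..x} t"
      by (rule nn_integral_multc) measurable
    also have "\<dots> = ennreal (phi k n t) * indicator {..x} t"
    proof (cases "t > 0")
      case True
      then show ?thesis using inner_integral[OF k n True] by simp
    next
      case False
      have "(\<integral>\<^sup>+w. ennreal (chi2_density n w * w * chi2_density k (w*t)) \<partial>lborel) = (\<integral>\<^sup>+(w::real). 0 \<partial>lborel)"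
      proof (rule nn_integral_cong)
        fix w :: real
        show "ennreal (chi2_density n w * w * chi2_density k (w*t)) = 0"
        proof (cases "w > 0")
          case True
          then have "w * t \<le> 0" using False by (simp add: mult_nonneg_nonpos)
          then show ?thesis by (simp add: chi2_density_def)
        next
          case False
          then show ?thesis by (simp add: chi2_density_def)
        qed
      qed
      then show ?thesis using False by (simp add: phi_def)
    qed
    finally show "(\<integral>\<^sup>+w. ennreal (chi2_density n w * w * chi2_density k (w*t)) * indicator {..x} t \<partial>lborel)
       = ennreal (phi k n t) * indicator {..x} t" .
  qed
  finally show ?thesis .
qed

lemma phi_cont: "continuous_on {0<..} (phi k n)"
proof -
  have "continuous_on {0<..} (\<lambda>t. Gamma ((k+n)/2) / (2 powr (k/2) * Gamma (k/2) * (2 powr (n/2) * Gamma (n/2)))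
      * t powr (k/2-1) / ((1+t)/2) powr ((k+n)/2))"
    by (intro continuous_intros) auto
  then show ?thesis by (rule continuous_on_cong[THEN iffD1, rotated 2]) (auto simp: phi_def)
qed

lemma phi_meas[measurable]: "phi k n \<in> borel_measurable borel"
  unfolding phi_def by measurable

lemma phi_nonneg: "k > 0 \<Longrightarrow> n > 0 \<Longrightarrow> phi k n t \<ge> 0"
  using phi_pos[of k n t] by (cases "t > 0") (auto simp: phi_def)

lemma Psi_emeasure:
  assumes k: "k > 0" and n: "n > 0"
  shows "ennreal (Psi k n x) = (\<integral>\<^sup>+t. ennreal (phi k n t) * indicator {..x} t \<partial>lborel)"
proof -
  interpret P: prob_space "chi2 k \<Otimes>\<^sub>M chi2 n"
    by (rule prob_space_pair) (auto intro: chi2_prob k n)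
  have "{p. fst p / snd p \<le> x} \<in> P.events"
    using ratio_set_meas[of x] by (simp add: chi2_def)
  then show ?thesis unfolding Psi_def
    by (simp add: P.emeasure_eq_measure[symmetric] emeasure_ratio[OF k n])
qed

lemma Psi_diff:
  assumes k: "k > 0" and n: "n > 0" and a: "0 < a" "a \<le> b"
  shows "Psi k n b = Psi k n a + integral {a..b} (phi k n)"
proof -
  have cont: "continuous_on {a..b} (phi k n)"
    by (rule continuous_on_subset[OF phi_cont]) (use a in auto)
  have hi: "(phi k n has_integral integral {a..b} (phi k n)) {a..b}"
    using integrable_continuous_interval[OF cont] by (rule integrable_integral)
  have I: "(\<integral>\<^sup>+t. ennreal (indicator {a..b} t * phi k n t) \<partial>lborel) = ennreal (integral {a..b} (phi k n))"
    by (rule nn_integral_has_integral_lebesgue[OF _ hi]) (use phi_nonneg k n in auto)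
  have "(\<integral>\<^sup>+t. ennreal (phi k n t) * indicator {a<..b} t \<partial>lborel)
      = (\<integral>\<^sup>+t. ennreal (indicator {a..b} t * phi k n t) \<partial>lborel)"
    by (intro nn_integral_cong_AE eventually_mono[OF AE_lborel_singleton[of a]]) (auto simp: indicator_def)
  also note I
  finally have I2: "(\<integral>\<^sup>+t. ennreal (phi k n t) * indicator {a<..b} t \<partial>lborel) = ennreal (integral {a..b} (phi k n))" .
  have "ennreal (Psi k n b) = (\<integral>\<^sup>+t. ennreal (phi k n t) * indicator {..a} t + ennreal (phi k n t) * indicator {a<..b} t \<partial>lborel)"
    unfolding Psi_emeasure[OF k n] using a
    by (intro nn_integral_cong) (auto simp: indicator_def)
  also have "\<dots> = ennreal (Psi k n a) + ennreal (integral {a..b} (phi k n))"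
    by (subst nn_integral_add) (auto simp: Psi_emeasure[OF k n] I2)
  finally have "ennreal (Psi k n b) = ennreal (Psi k n a) + ennreal (integral {a..b} (phi k n))" .
  moreover have "Psi k n a \<ge> 0" unfolding Psi_def by simp
  moreover have "integral {a..b} (phi k n) \<ge> 0"
    by (rule integral_nonneg[OF integrable_continuous_interval[OF cont]]) (use phi_nonneg k n in auto)
  ultimately have "ennreal (Psi k n b) = ennreal (Psi k n a + integral {a..b} (phi k n))"
    by (simp add: ennreal_plus)
  moreover have "Psi k n b \<ge> 0" unfolding Psi_def by simp
  ultimately show ?thesis
    using \<open>Psi k n a \<ge> 0\<close> \<open>integral {a..b} (phi k n) \<ge> 0\<close> by (subst (asm) ennreal_inj) auto
qed

lemma Psi_deriv:
  assumes k: "k > 0" and n: "n > 0" and x: "x > 0"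
  shows "(Psi k n has_real_derivative phi k n x) (at x)"
proof -
  define a where "a = x/2"
  define b where "b = 2*x"
  have ab: "0 < a" "a < x" "x < b" using x by (auto simp: a_def b_def)
  have cont: "continuous_on {a..b} (phi k n)"
    by (rule continuous_on_subset[OF phi_cont]) (use ab in auto)
  have "((\<lambda>y. integral {a..y} (phi k n)) has_real_derivative phi k n x) (at x within {a..b})"
    by (rule integral_has_real_derivative[OF cont]) (use ab in auto)
  then have d1: "((\<lambda>y. integral {a..y} (phi k n)) has_real_derivative phi k n x) (at x)"
    using ab by (subst (asm) at_within_Icc_at) auto
  have "((\<lambda>y. Psi k n a + integral {a..y} (phi k n)) has_real_derivative phi k n x) (at x)"
    using d1 by (intro derivative_eq_intros) auto
  then show ?thesis
  proof (rule has_field_derivative_transform_within_open[where S="{a<..<b}"])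
    fix y assume "y \<in> {a<..<b}"
    then have "a \<le> y" by auto
    from Psi_diff[OF k n ab(1) this] show "Psi k n a + integral {a..y} (phi k n) = Psi k n y" by simp
  qed (use ab in auto)
qed

lemma Psi_le1: "k > 0 \<Longrightarrow> n > 0 \<Longrightarrow> Psi k n x \<le> 1"
proof -
  assume k: "k > 0" and n: "n > 0"
  interpret P: prob_space "chi2 k \<Otimes>\<^sub>M chi2 n"
    by (rule prob_space_pair) (auto intro: chi2_prob k n)
  show ?thesis unfolding Psi_def by (rule P.prob_le_1)
qed

lemma Psi_nonneg: "Psi k n x \<ge> 0"
  unfolding Psi_def by simp

lemma Psi_zero: "k > 0 \<Longrightarrow> n > 0 \<Longrightarrow> Psi k n 0 = 0"
proof -
  assume k: "k > 0" and n: "n > 0"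
  have "ennreal (Psi k n 0) = (\<integral>\<^sup>+(t::real). 0 \<partial>lborel)"
    unfolding Psi_emeasure[OF k n] by (rule nn_integral_cong) (auto simp: phi_def indicator_def)
  then show ?thesis using Psi_nonneg[of k n 0] by simp
qed

lemma Psi_lim_top:
  assumes k: "k > 0" and n: "n > 0"
  shows "(\<lambda>i. Psi k n (real i)) \<longlonglongrightarrow> 1"
proof -
  interpret P: prob_space "chi2 k \<Otimes>\<^sub>M chi2 n"
    by (rule prob_space_pair) (auto intro: chi2_prob k n)
  let ?A = "\<lambda>i::nat. {p::real\<times>real. fst p / snd p \<le> real i}"
  have ev: "?A i \<in> P.events" for i
    using ratio_set_meas[of "real i"] by (simp add: chi2_def)
  have inc: "incseq ?A" by (auto simp: incseq_def order_trans)
  have U: "(\<Union>i. ?A i) = space (chi2 k \<Otimes>\<^sub>M chi2 n)"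
  proof -
    have "\<exists>i. fst p / snd p \<le> real i" for p :: "real \<times> real"
      using real_arch_simple by blast
    then show ?thesis by (auto simp: space_pair_measure chi2_def)
  qed
  have "(\<lambda>i. P.prob (?A i)) \<longlonglongrightarrow> P.prob (\<Union>i. ?A i)"
    by (rule Lim_measure_incseq) (use ev inc in auto)
  then show ?thesis unfolding Psi_def U P.prob_space .
qed

lemma Psi_lim_zero:
  assumes k: "k > 0" and n: "n > 0"
  shows "(\<lambda>i. Psi k n (1 / real (Suc i))) \<longlonglongrightarrow> 0"
proof -
  interpret P: prob_space "chi2 k \<Otimes>\<^sub>M chi2 n"
    by (rule prob_space_pair) (auto intro: chi2_prob k n)
  let ?A = "\<lambda>i::nat. {p::real\<times>real. fst p / snd p \<le> 1 / real (Suc i)}"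
  have ev: "?A i \<in> P.events" for i
    using ratio_set_meas[of "1 / real (Suc i)"] by (simp add: chi2_def)
  have dec: "decseq ?A"
    unfolding decseq_def
  proof (intro allI impI subsetI)
    fix i j :: nat and p :: "real \<times> real" assume "i \<le> j" "p \<in> ?A j"
    moreover have "1 / real (Suc j) \<le> 1 / real (Suc i)"
      using \<open>i \<le> j\<close> by (simp add: frac_le)
    ultimately show "p \<in> ?A i" by auto
  qed
  have I: "(\<Inter>i. ?A i) = {p. fst p / snd p \<le> 0}"
  proof (rule set_eqI)
    fix p :: "real \<times> real"
    have "(\<forall>i. fst p / snd p \<le> 1 / real (Suc i)) \<longleftrightarrow> fst p / snd p \<le> 0"
    proof
      assume h: "\<forall>i. fst p / snd p \<le> 1 / real (Suc i)"
      show "fst p / snd p \<le> 0"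
      proof (rule ccontr)
        assume "\<not> fst p / snd p \<le> 0"
        then obtain i where "inverse (real (Suc i)) < fst p / snd p"
          using reals_Archimedean[of "fst p / snd p"] by auto
        with h[rule_format, of i] show False by (simp add: inverse_eq_divide)
      qed
    next
      assume h: "fst p / snd p \<le> 0"
      show "\<forall>i. fst p / snd p \<le> 1 / real (Suc i)"
      proof
        fix i
        have "0 \<le> 1 / real (Suc i)" by simp
        with h show "fst p / snd p \<le> 1 / real (Suc i)" by linarith
      qed
    qed
    then show "p \<in> (\<Inter>i. ?A i) \<longleftrightarrow> p \<in> {p. fst p / snd p \<le> 0}" by auto
  qed
  have "(\<lambda>i. P.prob (?A i)) \<longlonglongrightarrow> P.prob (\<Inter>i. ?A i)"
    by (rule Lim_measure_decseq) (use ev dec in auto)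
  then show ?thesis unfolding I using Psi_zero[OF k n] unfolding Psi_def by simp
qed

lemma Psi_strict:
  assumes k: "k > 0" and n: "n > 0" and "0 < a" "a < b"
  shows "Psi k n a < Psi k n b"
proof (rule DERIV_pos_imp_increasing[OF \<open>a < b\<close>])
  fix x assume "a \<le> x" "x \<le> b"
  then have x: "x > 0" using \<open>0 < a\<close> by linarith
  show "\<exists>y. DERIV (Psi k n) x :> y \<and> y > 0"
    using Psi_deriv[OF k n x] phi_pos[OF k n x] by blast
qed

lemma Psi_cont: "k > 0 \<Longrightarrow> n > 0 \<Longrightarrow> x > 0 \<Longrightarrow> isCont (Psi k n) x"
  by (rule DERIV_isCont[OF Psi_deriv])

lemma Psi_uniq:
  assumes k: "k > 0" and n: "n > 0" and "x > 0" "y > 0" "Psi k n x = Psi k n y"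
  shows "x = y"
proof (rule ccontr)
  assume "x \<noteq> y"
  then consider "x < y" | "y < x" by linarith
  then show False
    using Psi_strict[OF k n, of x y] Psi_strict[OF k n, of y x] assms by cases auto
qed

lemma Psi_exists:
  assumes k: "k > 0" and n: "n > 0" and u: "0 < u" "u < 1"
  shows "\<exists>x>0. Psi k n x = u"
proof -
  have "\<forall>\<^sub>F i in sequentially. Psi k n (1 / real (Suc i)) < u"
    using u by (intro order_tendstoD(2)[OF Psi_lim_zero[OF k n]])
  moreover have "\<forall>\<^sub>F i in sequentially. Psi k n (real i) > u"
    using u by (intro order_tendstoD(1)[OF Psi_lim_top[OF k n]])
  ultimately have "\<forall>\<^sub>F i in sequentially. Psi k n (1 / real (Suc i)) < u \<and> Psi k n (real i) > u"
    by (rule eventually_conj)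
  then obtain N where N: "\<And>i. i \<ge> N \<Longrightarrow> Psi k n (1 / real (Suc i)) < u \<and> Psi k n (real i) > u"
    unfolding eventually_sequentially by blast
  define a where "a = 1 / real (Suc (Suc N))"
  define b where "b = real (Suc N)"
  have a: "a > 0" "a \<le> 1" unfolding a_def by auto
  have b: "b \<ge> 1" unfolding b_def by auto
  have Pa: "Psi k n a < u" and Pb: "Psi k n b > u"
    using N[of "Suc N"] unfolding a_def b_def by auto
  have cont: "continuous_on {a..b} (Psi k n)"
    using a by (intro continuous_at_imp_continuous_on ballI Psi_cont[OF k n]) auto
  obtain x where x: "a \<le> x" "x \<le> b" "Psi k n x = u"
    using IVT'[of "Psi k n" a u b, OF less_imp_le[OF Pa] less_imp_le[OF Pb] _ cont] a b by auto
  then show ?thesis using a by (intro exI[of _ x]) auto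
qed

lemma Psibar_inv_props:
  assumes m: "m > 0" and n: "n > 0" and u: "0 < u" "u < 1"
  shows "Psibar_inv m n u > 0 \<and> Psibar m n (Psibar_inv m n u) = u"
proof -
  obtain x where x: "x > 0" "Psi m n x = 1 - u" using Psi_exists[OF m n, of "1-u"] u by auto
  have "Psibar_inv m n u = x"
    unfolding Psibar_inv_def
  proof (rule the_equality)
    show "x > 0 \<and> Psibar m n x = u" using x by (simp add: Psibar_def)
  next
    fix y assume "y > 0 \<and> Psibar m n y = u"
    then show "y = x" using Psi_uniq[OF m n, of y x] x by (auto simp: Psibar_def)
  qed
  then show ?thesis using x by (simp add: Psibar_def)
qed

lemma Psibar_inv_Psibar:
  assumes m: "m > 0" and n: "n > 0" and x: "x > 0"
  shows "Psibar_inv m n (Psibar m n x) = x"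
  unfolding Psibar_inv_def
proof (rule the_equality)
  show "x > 0 \<and> Psibar m n x = Psibar m n x" using x by simp
next
  fix y assume "y > 0 \<and> Psibar m n y = Psibar m n x"
  then show "y = x" using Psi_uniq[OF m n, of y x] x by (auto simp: Psibar_def)
qed

lemma Psibar_deriv:
  "k > 0 \<Longrightarrow> n > 0 \<Longrightarrow> x > 0 \<Longrightarrow> (Psibar k n has_real_derivative - phi k n x) (at x)"
proof -
  assume k: "k > 0" and n: "n > 0" and x: "x > 0"
  have "((\<lambda>y. 1 - Psi k n y) has_real_derivative 0 - phi k n x) (at x)"
    by (intro DERIV_diff DERIV_const Psi_deriv[OF k n x])
  then show ?thesis unfolding Psibar_def[abs_def] by simp
qed

lemma Psibar_inv_deriv:
  assumes m: "m > 0" and n: "n > 0" and u: "0 < u" "u < 1"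
  shows "(Psibar_inv m n has_real_derivative inverse (- phi m n (Psibar_inv m n u))) (at u)"
proof -
  let ?x = "Psibar_inv m n u"
  have x: "?x > 0" "Psibar m n ?x = u" using Psibar_inv_props[OF m n u] by auto
  have cont: "isCont (Psibar_inv m n) u"
  proof -
    have "isCont (Psibar_inv m n) (Psibar m n ?x)"
    proof (rule isCont_inverse_function[where d="?x/2" and f="Psibar m n" and g="Psibar_inv m n"])
      fix z assume "\<bar>z - ?x\<bar> \<le> ?x / 2"
      then have z: "z > 0" using x by linarith
      show "Psibar_inv m n (Psibar m n z) = z" by (rule Psibar_inv_Psibar[OF m n z])
      show "isCont (Psibar m n) z" by (rule DERIV_isCont[OF Psibar_deriv[OF m n z]])
    qed (use x in auto)
    then show ?thesis using x by simp
  qed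
  show ?thesis
  proof (rule DERIV_inverse_function[where a=0 and b=1])
    show "DERIV (Psibar m n) (Psibar_inv m n u) :> - phi m n (Psibar_inv m n u)"
      by (rule Psibar_deriv[OF m n x(1)])
    show "- phi m n (Psibar_inv m n u) \<noteq> 0" using phi_pos[OF m n x(1)] by simp
    show "\<And>y. 0 < y \<Longrightarrow> y < 1 \<Longrightarrow> Psibar m n (Psibar_inv m n y) = y"
      using Psibar_inv_props[OF m n] by blast
  qed (use u cont in auto)
qed

definition Bc :: "real \<Rightarrow> real \<Rightarrow> real" where
  "Bc k n = Gamma ((k+n)/2) / (2 powr (k/2) * Gamma (k/2) * (2 powr (n/2) * Gamma (n/2)))"

lemma Bc_pos: "k > 0 \<Longrightarrow> n > 0 \<Longrightarrow> Bc k n > 0"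
  unfolding Bc_def by (auto intro!: Gamma_real_pos divide_pos_pos mult_pos_pos)

lemma ln_phi:
  assumes k: "k > 0" and n: "n > 0" and t: "t > 0"
  shows "ln (phi k n t) = ln (Bc k n) + (k/2-1) * ln t - ((k+n)/2) * (ln (1+t) - ln 2)"
proof -
  have "phi k n t = Bc k n * t powr (k/2-1) / ((1+t)/2) powr ((k+n)/2)"
    using t by (simp add: phi_def Bc_def)
  then have "ln (phi k n t) = ln (Bc k n) + ln (t powr (k/2-1)) - ln (((1+t)/2) powr ((k+n)/2))"
    using Bc_pos[OF k n] t by (simp add: ln_div ln_mult)
  also have "\<dots> = ln (Bc k n) + (k/2-1) * ln t - ((k+n)/2) * (ln (1+t) - ln 2)"
    using t by (simp add: ln_powr ln_div)
  finally show ?thesis .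
qed

lemma mono1:
  fixes \<theta> x1 x2 :: real
  assumes th: "\<theta> > 0" and x: "0 < x1" "x1 \<le> x2"
  shows "ln x1 - ln (1 + \<theta>*x1) \<le> ln x2 - ln (1 + \<theta>*x2)"
proof -
  have p1: "1 + \<theta>*x1 > 0" "1 + \<theta>*x2 > 0" using th x by (auto intro!: add_pos_pos)
  have "x1 * (1 + \<theta>*x2) \<le> x2 * (1 + \<theta>*x1)"
    using x th by (simp add: algebra_simps)
  then have "x1 / (1 + \<theta>*x1) \<le> x2 / (1 + \<theta>*x2)"
    using p1 by (simp add: divide_simps mult.commute)
  then have "ln (x1 / (1 + \<theta>*x1)) \<le> ln (x2 / (1 + \<theta>*x2))"
    using p1 x by (subst ln_le_cancel_iff) auto
  then show ?thesis using p1 x by (simp add: ln_div)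
qed

lemma mono2:
  fixes \<theta> x1 x2 :: real
  assumes th: "\<theta> > 0" "\<theta> \<le> 1" and x: "0 < x1" "x1 \<le> x2"
  shows "ln (1 + x1) - ln (1 + \<theta>*x1) \<le> ln (1 + x2) - ln (1 + \<theta>*x2)"
proof -
  have p1: "1 + \<theta>*x1 > 0" "1 + \<theta>*x2 > 0" using th x by (auto intro!: add_pos_pos)
  have "(1+x1) * (1 + \<theta>*x2) - (1+x2) * (1 + \<theta>*x1) = (\<theta> - 1) * (x2 - x1)"
    by (simp add: algebra_simps)
  also have "\<dots> \<le> 0" using th x by (intro mult_nonpos_nonneg) auto
  finally have "(1+x1) / (1 + \<theta>*x1) \<le> (1+x2) / (1 + \<theta>*x2)"
    using p1 by (simp add: divide_simps mult.commute)
  then have "ln ((1+x1) / (1 + \<theta>*x1)) \<le> ln ((1+x2) / (1 + \<theta>*x2))"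
    using p1 x by (subst ln_le_cancel_iff) auto
  then show ?thesis using p1 x by (simp add: ln_div)
qed

lemma mono3:
  fixes \<theta> x1 x2 :: real
  assumes th: "\<theta> > 1" and x: "0 < x1" "x1 \<le> x2"
  shows "ln (1 + x2) - ln (1 + \<theta>*x2) \<le> ln (1 + x1) - ln (1 + \<theta>*x1)"
proof -
  have p1: "1 + \<theta>*x1 > 0" "1 + \<theta>*x2 > 0" using th x by (auto intro!: add_pos_pos)
  have "(1+x2) * (1 + \<theta>*x1) - (1+x1) * (1 + \<theta>*x2) = (1 - \<theta>) * (x2 - x1)"
    by (simp add: algebra_simps)
  also have "\<dots> \<le> 0" using th x by (intro mult_nonpos_nonneg) auto
  finally have "(1+x2) / (1 + \<theta>*x2) \<le> (1+x1) / (1 + \<theta>*x1)"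
    using p1 by (simp add: divide_simps mult.commute)
  then have "ln ((1+x2) / (1 + \<theta>*x2)) \<le> ln ((1+x1) / (1 + \<theta>*x1))"
    using p1 x by (subst ln_le_cancel_iff) auto
  then show ?thesis using p1 x by (simp add: ln_div)
qed

definition Rr :: "real \<Rightarrow> real \<Rightarrow> real \<Rightarrow> real \<Rightarrow> real \<Rightarrow> real" where
  "Rr m h n \<theta> x = \<theta> * phi (m+h) n (\<theta>*x) / phi m n x"

lemma Rr_pos: "m > 0 \<Longrightarrow> n > 0 \<Longrightarrow> h \<ge> 0 \<Longrightarrow> \<theta> > 0 \<Longrightarrow> x > 0 \<Longrightarrow> Rr m h n \<theta> x > 0"
  unfolding Rr_def by (intro divide_pos_pos mult_pos_pos phi_pos) auto

lemma ln_Rr_diff: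
  assumes m: "m > 0" and n: "n > 0" and h: "h \<ge> 0" and th: "\<theta> > 0" and x: "0 < x1" "0 < x2"
  shows "ln (Rr m h n \<theta> x2) - ln (Rr m h n \<theta> x1) =
     (h/2) * ((ln x2 - ln (1 + \<theta>*x2)) - (ln x1 - ln (1 + \<theta>*x1)))
     + ((m+n)/2) * ((ln (1 + x2) - ln (1 + \<theta>*x2)) - (ln (1 + x1) - ln (1 + \<theta>*x1)))"
proof -
  have mh: "m + h > 0" using m h by linarith
  have l: "ln (Rr m h n \<theta> x) = ln \<theta> + ln (phi (m+h) n (\<theta>*x)) - ln (phi m n x)" if "x > 0" for x
    unfolding Rr_def using that th phi_pos[OF mh n, of "\<theta>*x"] phi_pos[OF m n, of x]
    by (simp add: ln_div ln_mult)
  have e1: "ln (phi (m+h) n (\<theta>*x)) = ln (Bc (m+h) n) + ((m+h)/2-1) * (ln \<theta> + ln x) - ((m+h+n)/2) * (ln (1+\<theta>*x) - ln 2)"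
    if "x > 0" for x
    using ln_phi[OF mh n, of "\<theta>*x"] that th by (simp add: ln_mult)
  have e2: "ln (phi m n x) = ln (Bc m n) + (m/2-1) * ln x - ((m+n)/2) * (ln (1+x) - ln 2)" if "x > 0" for x
    using ln_phi[OF m n that] .
  show ?thesis
    unfolding l[OF x(1)] l[OF x(2)] e1[OF x(1)] e1[OF x(2)] e2[OF x(1)] e2[OF x(2)]
    by (simp add: algebra_simps add_divide_distrib diff_divide_distrib)
qed

lemma Rr_mono_inc:
  assumes m: "m > 0" and n: "n > 0" and h: "h \<ge> 0" and th: "\<theta> > 0" "\<theta> \<le> 1" and x: "0 < x1" "x1 \<le> x2"
  shows "Rr m h n \<theta> x1 \<le> Rr m h n \<theta> x2"
proof -
  have x2: "x2 > 0" using x by linarith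
  have "0 \<le> (h/2) * ((ln x2 - ln (1 + \<theta>*x2)) - (ln x1 - ln (1 + \<theta>*x1)))"
    using mono1[OF th(1) x] h by (intro mult_nonneg_nonneg) auto
  moreover have "0 \<le> ((m+n)/2) * ((ln (1 + x2) - ln (1 + \<theta>*x2)) - (ln (1 + x1) - ln (1 + \<theta>*x1)))"
    using mono2[OF th x] m n by (intro mult_nonneg_nonneg) auto
  ultimately have "ln (Rr m h n \<theta> x1) \<le> ln (Rr m h n \<theta> x2)"
    using ln_Rr_diff[OF m n h th(1) x(1) x2] by linarith
  then show ?thesis using Rr_pos[OF m n h th(1)] x x2 by (subst (asm) ln_le_cancel_iff) auto
qed

lemma Rr_mono_dec:
  assumes m: "m > 0" and n: "n > 0" and th: "\<theta> > 1" and x: "0 < x1" "x1 \<le> x2"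
  shows "Rr m 0 n \<theta> x2 \<le> Rr m 0 n \<theta> x1"
proof -
  have x2: "x2 > 0" using x by linarith
  have th0: "\<theta> > 0" using th by linarith
  have "((m+n)/2) * ((ln (1 + x2) - ln (1 + \<theta>*x2)) - (ln (1 + x1) - ln (1 + \<theta>*x1))) \<le> 0"
    using mono3[OF th x] m n by (intro mult_nonneg_nonpos) auto
  then have "ln (Rr m 0 n \<theta> x2) \<le> ln (Rr m 0 n \<theta> x1)"
    using ln_Rr_diff[OF m n order_refl th0 x(1) x2] by linarith
  then show ?thesis using Rr_pos[OF m n order_refl th0] x x2 by (subst (asm) ln_le_cancel_iff) auto
qed

lemma Psibar_inv_anti:
  assumes m: "m > 0" and n: "n > 0" and u: "0 < u1" "u1 \<le> u2" "u2 < 1"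
  shows "Psibar_inv m n u2 \<le> Psibar_inv m n u1"
proof (rule ccontr)
  assume "\<not> ?thesis"
  then have lt: "Psibar_inv m n u1 < Psibar_inv m n u2" by simp
  have p1: "Psibar_inv m n u1 > 0 \<and> Psibar m n (Psibar_inv m n u1) = u1"
    using Psibar_inv_props[OF m n, of u1] u by auto
  have p2: "Psibar_inv m n u2 > 0 \<and> Psibar m n (Psibar_inv m n u2) = u2"
    using Psibar_inv_props[OF m n, of u2] u by auto
  have "Psi m n (Psibar_inv m n u1) < Psi m n (Psibar_inv m n u2)"
    using Psi_strict[OF m n] p1 lt by blast
  then show False using p1 p2 u by (simp add: Psibar_def)
qed

lemma g_deriv:
  assumes m: "m > 0" and n: "n > 0" and h: "h \<ge> 0" and th: "\<theta> > 0" and u: "0 < u" "u < 1"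
  shows "((\<lambda>u. Psibar (m + h) n (\<theta> * Psibar_inv m n u)) has_real_derivative
           Rr m h n \<theta> (Psibar_inv m n u)) (at u)"
proof -
  let ?x = "Psibar_inv m n u"
  have x: "?x > 0" using Psibar_inv_props[OF m n u] by auto
  have mh: "m + h > 0" using m h by linarith
  have d1: "((\<lambda>u. \<theta> * Psibar_inv m n u) has_real_derivative \<theta> * inverse (- phi m n ?x)) (at u)"
    by (intro DERIV_cmult Psibar_inv_deriv[OF m n u])
  have d2: "(Psibar (m+h) n has_real_derivative - phi (m+h) n (\<theta> * ?x)) (at (\<theta> * ?x))"
    by (rule Psibar_deriv[OF mh n]) (use th x in simp)
  have "((\<lambda>u. Psibar (m + h) n (\<theta> * Psibar_inv m n u)) has_real_derivative
           - phi (m+h) n (\<theta> * ?x) * (\<theta> * inverse (- phi m n ?x))) (at u)"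
    using DERIV_chain2[OF d2 d1] .
  moreover have "- phi (m+h) n (\<theta> * ?x) * (\<theta> * inverse (- phi m n ?x)) = Rr m h n \<theta> ?x"
    using phi_pos[OF m n x] by (simp add: Rr_def field_simps)
  ultimately show ?thesis by simp
qed

theorem mainTheorem7:
  fixes m n h \<theta> :: real
  assumes "m > 0" and "n > 0" and "h \<ge> 0" and "\<theta> > 0"
  defines "g \<equiv> (\<lambda>u. Psibar (m + h) n (\<theta> * Psibar_inv m n u))"
  shows "(\<theta> \<le> 1 \<longrightarrow> concave_on {0<..<1} g) \<and>
         (\<theta> > 1 \<and> h = 0 \<longrightarrow> convex_on {0<..<1} g)"
proof (intro conjI impI)
  assume th1: "\<theta> \<le> 1"
  show "concave_on {0<..<1} g"
    unfolding concave_on_def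
  proof (rule convex_on_realI[where f'="\<lambda>u. - Rr m h n \<theta> (Psibar_inv m n u)"])
    show "connected {0<..<1::real}" by simp
  next
    fix u :: real assume "u \<in> {0<..<1}"
    then show "((\<lambda>x. - g x) has_real_derivative - Rr m h n \<theta> (Psibar_inv m n u)) (at u)"
      unfolding g_def using assms by (intro DERIV_minus g_deriv) auto
  next
    fix u1 u2 :: real assume u: "u1 \<in> {0<..<1}" "u2 \<in> {0<..<1}" "u1 \<le> u2"
    have a: "Psibar_inv m n u2 \<le> Psibar_inv m n u1"
      using Psibar_inv_anti[OF assms(1,2)] u by auto
    have p: "Psibar_inv m n u2 > 0" using Psibar_inv_props[OF assms(1,2)] u by auto
    show "- Rr m h n \<theta> (Psibar_inv m n u1) \<le> - Rr m h n \<theta> (Psibar_inv m n u2)"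
      using Rr_mono_inc[OF assms(1,2,3,4) th1 p a] by simp
  qed
next
  assume th: "\<theta> > 1 \<and> h = 0"
  then have h0: "h = 0" and th1: "\<theta> > 1" by auto
  show "convex_on {0<..<1} g"
  proof (rule convex_on_realI[where f'="\<lambda>u. Rr m h n \<theta> (Psibar_inv m n u)"])
    show "connected {0<..<1::real}" by simp
  next
    fix u :: real assume "u \<in> {0<..<1}"
    then show "(g has_real_derivative Rr m h n \<theta> (Psibar_inv m n u)) (at u)"
      unfolding g_def using assms by (intro g_deriv) auto
  next
    fix u1 u2 :: real assume u: "u1 \<in> {0<..<1}" "u2 \<in> {0<..<1}" "u1 \<le> u2"
    have a: "Psibar_inv m n u2 \<le> Psibar_inv m n u1"
      using Psibar_inv_anti[OF assms(1,2)] u by auto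
    have p: "Psibar_inv m n u2 > 0" using Psibar_inv_props[OF assms(1,2)] u by auto
    show "Rr m h n \<theta> (Psibar_inv m n u1) \<le> Rr m h n \<theta> (Psibar_inv m n u2)"
      using Rr_mono_dec[OF assms(1,2) th1 p a] h0 by simp
  qed
qed

end
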